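(* Let $Q$ be a commutative automorphic loop of nilpotency class $3$. Then $((a,b,c),d,e)^{-1}=(e,d,(a,b,c))$ and $(a,(b,c,d),e)=(a,e,(b,c,d))((b,c,d),a,e)$ for every $a,b,c,d,e\in Q$.
   Context: A loop is a set with a binary operation such that all left and right translations $L_a:b\mapsto ab$, $R_a:b\mapsto ba$ are bijections and there is a two-sided identity $1$. The inner mapping group is the stabilizer of $1$ in the group generated by all translations; $Q$ is automorphic if all inner mappings are automorphisms. The associator $(a,b,c)$ is defined by $(ab)c=(a(bc))(a,b,c)$. The center $Z(Q)$ is the set of elements fixed by all inner mappings; $Z_0=1$, $Z_{i+1}(Q)$ is the preimage of $Z(Q/Z_i(Q))$, and $Q$ has nilpotency class $n$ if $Z_{n-1}(Q)\neq Q=Z_n(Q)$. Inverses $z^{-1}$ are two-sided inverses (automorphic loops are power-associative). *)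

theory Defs
  imports "HOL-Algebra.Bij" "HOL-Algebra.Generated_Groups"
begin

definition is_loop :: "'a set \<Rightarrow> ('a \<Rightarrow> 'a \<Rightarrow> 'a) \<Rightarrow> 'a \<Rightarrow> bool" where
  "is_loop Q m u \<longleftrightarrow>
     u \<in> Q \<and> (\<forall>a\<in>Q. \<forall>b\<in>Q. m a b \<in> Q) \<and>
     (\<forall>a\<in>Q. m u a = a \<and> m a u = a) \<and>
     (\<forall>a\<in>Q. bij_betw (\<lambda>b. m a b) Q Q \<and> bij_betw (\<lambda>b. m b a) Q Q)"

definition lmap :: "'a set \<Rightarrow> ('a \<Rightarrow> 'a \<Rightarrow> 'a) \<Rightarrow> 'a \<Rightarrow> 'a \<Rightarrow> 'a" where
  "lmap Q m a = (\<lambda>b\<in>Q. m a b)"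

definition rmap :: "'a set \<Rightarrow> ('a \<Rightarrow> 'a \<Rightarrow> 'a) \<Rightarrow> 'a \<Rightarrow> 'a \<Rightarrow> 'a" where
  "rmap Q m a = (\<lambda>b\<in>Q. m b a)"

definition mlt_group :: "'a set \<Rightarrow> ('a \<Rightarrow> 'a \<Rightarrow> 'a) \<Rightarrow> ('a \<Rightarrow> 'a) set" where
  "mlt_group Q m = generate (BijGroup Q) ((lmap Q m ` Q) \<union> (rmap Q m ` Q))"

definition inn_group :: "'a set \<Rightarrow> ('a \<Rightarrow> 'a \<Rightarrow> 'a) \<Rightarrow> 'a \<Rightarrow> ('a \<Rightarrow> 'a) set" where
  "inn_group Q m u = {f \<in> mlt_group Q m. f u = u}"

definition loop_commutative :: "'a set \<Rightarrow> ('a \<Rightarrow> 'a \<Rightarrow> 'a) \<Rightarrow> bool" where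
  "loop_commutative Q m \<longleftrightarrow> (\<forall>a\<in>Q. \<forall>b\<in>Q. m a b = m b a)"

text \<open>Automorphic: every inner mapping is an automorphism (inner mappings are already
  bijections of Q, so it remains to require that they are multiplicative).\<close>
definition loop_automorphic :: "'a set \<Rightarrow> ('a \<Rightarrow> 'a \<Rightarrow> 'a) \<Rightarrow> 'a \<Rightarrow> bool" where
  "loop_automorphic Q m u \<longleftrightarrow>
     (\<forall>f\<in>inn_group Q m u. \<forall>a\<in>Q. \<forall>b\<in>Q. f (m a b) = m (f a) (f b))"

definition loop_center :: "'a set \<Rightarrow> ('a \<Rightarrow> 'a \<Rightarrow> 'a) \<Rightarrow> 'a \<Rightarrow> 'a set" where
  "loop_center Q m u = {z \<in> Q. \<forall>f\<in>inn_group Q m u. f z = z}"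

text \<open>Quotient loop Q/N (for a normal subloop N): cosets aN, with the product of cosets
  as complex product.\<close>
definition lcoset :: "('a \<Rightarrow> 'a \<Rightarrow> 'a) \<Rightarrow> 'a \<Rightarrow> 'a set \<Rightarrow> 'a set" where
  "lcoset m a N = (\<lambda>n. m a n) ` N"

definition quot_carrier :: "'a set \<Rightarrow> ('a \<Rightarrow> 'a \<Rightarrow> 'a) \<Rightarrow> 'a set \<Rightarrow> 'a set set" where
  "quot_carrier Q m N = (\<lambda>a. lcoset m a N) ` Q"

definition quot_mult :: "('a \<Rightarrow> 'a \<Rightarrow> 'a) \<Rightarrow> 'a set \<Rightarrow> 'a set \<Rightarrow> 'a set" where
  "quot_mult m A B = {m a b | a b. a \<in> A \<and> b \<in> B}"

fun upper_center :: "'a set \<Rightarrow> ('a \<Rightarrow> 'a \<Rightarrow> 'a) \<Rightarrow> 'a \<Rightarrow> nat \<Rightarrow> 'a set" where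
  "upper_center Q m u 0 = {u}"
| "upper_center Q m u (Suc i) =
     (let N = upper_center Q m u i in
      {x \<in> Q. lcoset m x N \<in> loop_center (quot_carrier Q m N) (quot_mult m) N})"

definition nilpotency_class :: "'a set \<Rightarrow> ('a \<Rightarrow> 'a \<Rightarrow> 'a) \<Rightarrow> 'a \<Rightarrow> nat \<Rightarrow> bool" where
  "nilpotency_class Q m u n \<longleftrightarrow>
     n \<ge> 1 \<and> upper_center Q m u (n - 1) \<noteq> Q \<and> upper_center Q m u n = Q"

definition associator :: "'a set \<Rightarrow> ('a \<Rightarrow> 'a \<Rightarrow> 'a) \<Rightarrow> 'a \<Rightarrow> 'a \<Rightarrow> 'a \<Rightarrow> 'a" where
  "associator Q m a b c = (THE z. z \<in> Q \<and> m (m a b) c = m (m a (m b c)) z)"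

definition loop_inverse :: "'a set \<Rightarrow> ('a \<Rightarrow> 'a \<Rightarrow> 'a) \<Rightarrow> 'a \<Rightarrow> 'a \<Rightarrow> 'a" where
  "loop_inverse Q m u z = (THE w. w \<in> Q \<and> m z w = u \<and> m w z = u)"

end

theory Submission
  imports Defs
begin

lemma Bij_inj: "f \<in> Bij S \<Longrightarrow> inj_on f S \<and> f ` S = S"
  unfolding Bij_def bij_betw_def by blast

locale cloop =
  fixes S :: "'b set" and M :: "'b \<Rightarrow> 'b \<Rightarrow> 'b" and e :: 'b
  assumes loop: "is_loop S M e" and comm0: "loop_commutative S M"
begin

lemma e_in: "e \<in> S" using loop by (simp add: is_loop_def)
lemma cl: "a \<in> S \<Longrightarrow> b \<in> S \<Longrightarrow> M a b \<in> S" using loop by (simp add: is_loop_def)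
lemma lid: "a \<in> S \<Longrightarrow> M e a = a" using loop by (simp add: is_loop_def)
lemma rid: "a \<in> S \<Longrightarrow> M a e = a" using loop by (simp add: is_loop_def)
lemma com: "a \<in> S \<Longrightarrow> b \<in> S \<Longrightarrow> M a b = M b a" using comm0 by (simp add: loop_commutative_def)
lemma lbij: "a \<in> S \<Longrightarrow> bij_betw (\<lambda>b. M a b) S S" using loop by (simp add: is_loop_def)
lemma rbij: "a \<in> S \<Longrightarrow> bij_betw (\<lambda>b. M b a) S S" using loop by (simp add: is_loop_def)
lemma linj: "a \<in> S \<Longrightarrow> b \<in> S \<Longrightarrow> c \<in> S \<Longrightarrow> M a b = M a c \<Longrightarrow> b = c"
  using lbij[of a] by (auto simp: bij_betw_def inj_on_def)
lemma ldiv: assumes a: "a \<in> S" and b: "b \<in> S" shows "\<exists>t\<in>S. M a t = b"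
proof -
  have "(\<lambda>t. M a t) ` S = S" using lbij[OF a] by (simp add: bij_betw_def)
  hence "b \<in> (\<lambda>t. M a t) ` S" using b by simp
  thus ?thesis by blast
qed

lemma rmap_Bij: assumes a: "a \<in> S" shows "rmap S M a \<in> Bij S"
proof -
  have "bij_betw (restrict (\<lambda>b. M b a) S) S S \<longleftrightarrow> bij_betw (\<lambda>b. M b a) S S"
    by (rule bij_betw_cong) simp
  hence "bij_betw (restrict (\<lambda>b. M b a) S) S S" using rbij[OF a] by blast
  thus ?thesis unfolding Bij_def rmap_def by simp
qed
lemma lmap_Bij: assumes a: "a \<in> S" shows "lmap S M a \<in> Bij S"
proof -
  have "bij_betw (restrict (\<lambda>b. M a b) S) S S \<longleftrightarrow> bij_betw (\<lambda>b. M a b) S S"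
    by (rule bij_betw_cong) simp
  hence "bij_betw (restrict (\<lambda>b. M a b) S) S S" using lbij[OF a] by blast
  thus ?thesis unfolding Bij_def lmap_def by simp
qed

definition central where
  "central z \<longleftrightarrow> z \<in> S \<and> (\<forall>a\<in>S. \<forall>b\<in>S. M (M z a) b = M z (M a b))"

lemma central_left: "central z \<Longrightarrow> a \<in> S \<Longrightarrow> b \<in> S \<Longrightarrow> M (M z a) b = M z (M a b)"
  by (simp add: central_def)

lemma central_mid: assumes "central z" "a \<in> S" "b \<in> S" shows "M (M a z) b = M a (M z b)"
proof -
  have z: "z \<in> S" using assms by (simp add: central_def)
  have "M (M a z) b = M (M z a) b" using z assms com by simp
  also have "\<dots> = M z (M a b)" using central_left assms by simp
  also have "\<dots> = M z (M b a)" using com assms by simp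
  also have "\<dots> = M (M z b) a" using central_left assms by simp
  also have "\<dots> = M a (M z b)" using com assms z cl by simp
  finally show ?thesis .
qed

lemma central_right: assumes "central z" "a \<in> S" "b \<in> S" shows "M (M a b) z = M a (M b z)"
proof -
  have z: "z \<in> S" using assms by (simp add: central_def)
  have "M (M a b) z = M z (M a b)" using z assms com cl by simp
  also have "\<dots> = M z (M b a)" using com assms by simp
  also have "\<dots> = M (M z b) a" using central_left assms by simp
  also have "\<dots> = M a (M b z)" using com assms z cl by simp
  finally show ?thesis .
qed

lemma center_central: assumes "z \<in> loop_center S M e" shows "central z"
proof -
  have zS: "z \<in> S" and fixz: "\<And>f. f \<in> inn_group S M e \<Longrightarrow> f z = z"
    using assms by (auto simp: loop_center_def)
  have "M (M z a) b = M z (M a b)" if a: "a \<in> S" and b: "b \<in> S" for a b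
  proof -
    let ?G = "BijGroup S"
    let ?H = "lmap S M ` S \<union> rmap S M ` S"
    define Ra Rb Rab where "Ra = rmap S M a" and "Rb = rmap S M b" and "Rab = rmap S M (M a b)"
    have ab: "M a b \<in> S" using a b cl by simp
    have B: "Ra \<in> Bij S" "Rb \<in> Bij S" "Rab \<in> Bij S"
      using rmap_Bij a b ab by (auto simp: Ra_def Rb_def Rab_def)
    have iB: "inv\<^bsub>?G\<^esub> Rab = (\<lambda>x\<in>S. inv_into S Rab x)" using inv_BijGroup[OF B(3)] by simp
    have iB2: "(\<lambda>x\<in>S. inv_into S Rab x) \<in> Bij S" using restrict_inv_into_Bij[OF B(3)] by simp
    define f where "f = inv\<^bsub>?G\<^esub> Rab \<otimes>\<^bsub>?G\<^esub> (Rb \<otimes>\<^bsub>?G\<^esub> Ra)"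
    have gen: "f \<in> generate ?G ?H" unfolding f_def
      by (rule generate.eng[OF generate.inv generate.eng[OF generate.incl generate.incl]])
         (use a b ab in \<open>auto simp: Ra_def Rb_def Rab_def\<close>)
    have RbRa: "Rb \<otimes>\<^bsub>?G\<^esub> Ra = compose S Rb Ra" using B by (simp add: BijGroup_def)
    have cB: "compose S Rb Ra \<in> Bij S" using B compose_Bij by blast
    have fdef: "f = compose S (\<lambda>x\<in>S. inv_into S Rab x) (compose S Rb Ra)"
      unfolding f_def RbRa iB using iB2 cB by (simp add: BijGroup_def)
    have fx: "f x = inv_into S Rab (Rb (Ra x))" if "x \<in> S" for x
    proof -
      have "Rb (Ra x) \<in> S" using that a b cl by (simp add: Ra_def Rb_def rmap_def)
      thus ?thesis unfolding fdef using that by (simp add: compose_eq)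
    qed
    have injR: "inj_on Rab S" and imR: "Rab ` S = S" using Bij_inj[OF B(3)] by auto
    have "Rb (Ra e) = Rab e" using e_in a b ab by (simp add: Ra_def Rb_def Rab_def rmap_def lid cl)
    hence fe: "f e = e" using fx e_in injR by simp
    have "f \<in> inn_group S M e" using gen fe by (simp add: inn_group_def mlt_group_def)
    hence "f z = z" by (rule fixz)
    hence "inv_into S Rab (M (M z a) b) = z" using fx zS a b cl by (simp add: Ra_def Rb_def rmap_def)
    hence "Rab (inv_into S Rab (M (M z a) b)) = Rab z" by simp
    moreover have "M (M z a) b \<in> Rab ` S" using imR zS a b cl by simp
    ultimately have "M (M z a) b = Rab z" using f_inv_into_f by metis
    thus ?thesis using zS ab by (simp add: Rab_def rmap_def)
  qed
  thus ?thesis using zS by (simp add: central_def)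
qed

lemma gen_commute:
  assumes c: "central z" and g: "g \<in> generate (BijGroup S) (lmap S M ` S \<union> rmap S M ` S)"
  shows "g \<in> Bij S \<and> (\<forall>x\<in>S. g (M z x) = M z (g x))"
  using g
proof induction
  case one
  have zS: "z \<in> S" using c by (simp add: central_def)
  have o: "one (BijGroup S) = (\<lambda>x\<in>S. x)" by (simp add: BijGroup_def)
  show ?case unfolding o apply (rule conjI) apply (rule id_Bij) using zS cl by auto
next
  case (incl h)
  have zS: "z \<in> S" using c by (simp add: central_def)
  show ?case
  proof (cases "h \<in> lmap S M ` S")
    case True
    then obtain a where a: "a \<in> S" "h = lmap S M a" by auto
    have "M a (M z x) = M z (M a x)" if "x \<in> S" for x
      using central_mid[OF c a(1) that] central_left[OF c a(1) that] com zS a that by simp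
    hence "\<forall>x\<in>S. h (M z x) = M z (h x)" using a zS cl by (simp add: lmap_def)
    moreover have "h \<in> Bij S" using lmap_Bij a by simp
    ultimately show ?thesis by blast
  next
    case False
    then obtain a where a: "a \<in> S" "h = rmap S M a" using incl by auto
    have "\<forall>x\<in>S. h (M z x) = M z (h x)" using a zS cl central_left[OF c] by (simp add: rmap_def)
    moreover have "h \<in> Bij S" using rmap_Bij a by simp
    ultimately show ?thesis by blast
  qed
next
  case (inv h)
  have zS: "z \<in> S" using c by (simp add: central_def)
  have hB: "h \<in> Bij S" using inv lmap_Bij rmap_Bij by auto
  have hc: "h (M z x) = M z (h x)" if "x \<in> S" for x
  proof (cases "h \<in> lmap S M ` S")
    case True
    then obtain a where a: "a \<in> S" "h = lmap S M a" by auto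
    show ?thesis using central_mid[OF c a(1) that] central_left[OF c a(1) that] com zS a that cl
      by (simp add: lmap_def)
  next
    case False
    then obtain a where a: "a \<in> S" "h = rmap S M a" using inv by auto
    show ?thesis using a zS cl central_left[OF c] that by (simp add: rmap_def)
  qed
  have injh: "inj_on h S" and imh: "h ` S = S" using Bij_inj[OF hB] by auto
  have "inv_into S h (M z x) = M z (inv_into S h x)" if x: "x \<in> S" for x
  proof -
    let ?y = "inv_into S h x"
    have y: "?y \<in> S" using Bij_inv_into_mem[OF hB x] .
    have "h ?y = x" using f_inv_into_f[of x h S] imh x by simp
    hence "h (M z ?y) = M z x" using hc y by simp
    thus ?thesis by (rule inv_into_f_eq[OF injh cl[OF zS y]])
  qed
  hence 1: "\<forall>x\<in>S. restrict (inv_into S h) S (M z x) = M z (restrict (inv_into S h) S x)"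
    using zS cl by simp
  have iv: "inv\<^bsub>BijGroup S\<^esub> h = restrict (inv_into S h) S" by (rule inv_BijGroup[OF hB])
  show ?case unfolding iv using restrict_inv_into_Bij[OF hB] 1 by blast
next
  case (eng h1 h2)
  have zS: "z \<in> S" using c by (simp add: central_def)
  have "h1 \<otimes>\<^bsub>BijGroup S\<^esub> h2 = compose S h1 h2" using eng by (simp add: BijGroup_def)
  moreover have "compose S h1 h2 \<in> Bij S" using eng compose_Bij by blast
  moreover have "\<forall>x\<in>S. compose S h1 h2 (M z x) = M z (compose S h1 h2 x)"
    using eng zS cl Bij_imp_funcset[of h2 S] by (auto simp: compose_eq funcset_mem)
  ultimately show ?case by simp
qed

lemma central_center: assumes c: "central z" shows "z \<in> loop_center S M e"
proof -
  have zS: "z \<in> S" using c by (simp add: central_def)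
  have "f z = z" if "f \<in> inn_group S M e" for f
  proof -
    have g: "f \<in> generate (BijGroup S) (lmap S M ` S \<union> rmap S M ` S)" and fe: "f e = e"
      using that by (auto simp: inn_group_def mlt_group_def)
    have "f (M z e) = M z (f e)" using gen_commute[OF c g] e_in by blast
    thus ?thesis using fe rid zS by simp
  qed
  thus ?thesis using zS by (simp add: loop_center_def)
qed

lemma center_iff: "z \<in> loop_center S M e \<longleftrightarrow> central z"
  using center_central central_center by blast

lemma central_e: "central e"
  using e_in lid cl by (simp add: central_def)

lemma central_mult: assumes "central z" "central w" shows "central (M z w)"
proof -
  have zS: "z \<in> S" "w \<in> S" using assms by (auto simp: central_def)
  have "M (M (M z w) a) b = M (M z w) (M a b)" if "a \<in> S" "b \<in> S" for a b
    using central_left[OF assms(1)] central_left[OF assms(2)] zS that cl by simp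
  thus ?thesis using zS cl by (simp add: central_def)
qed

lemma central_inv: assumes c: "central z" shows "\<exists>z'. central z' \<and> M z z' = e"
proof -
  have zS: "z \<in> S" using c by (simp add: central_def)
  obtain z' where z': "z' \<in> S" "M z z' = e" using ldiv[OF zS e_in] by blast
  have "M (M z' a) b = M z' (M a b)" if a: "a \<in> S" and b: "b \<in> S" for a b
  proof -
    have 1: "M (M z (M z' a)) b = M z (M (M z' a) b)" using central_left[OF c, of "M z' a" b] z' a b cl by simp
    have 2: "M z (M z' a) = M (M z z') a" using central_left[OF c, of z' a] z' a by simp
    have 3: "M z (M z' (M a b)) = M (M z z') (M a b)" using central_left[OF c, of z' "M a b"] z' a b cl by simp
    have 4: "M z (M (M z' a) b) = M a b" using 1 2 z' a lid by simp
    have 5: "M z (M z' (M a b)) = M a b" using 3 z' a b cl lid by simp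
    have "M z (M (M z' a) b) = M z (M z' (M a b))" using 4 5 by simp
    thus ?thesis by (rule linj[OF zS cl[OF cl[OF z'(1) a] b] cl[OF z'(1) cl[OF a b]]])
  qed
  thus ?thesis using z' by (auto simp: central_def)
qed


lemma central_prod:
  assumes "central z1" "central z2" "x \<in> S" "y \<in> S"
  shows "M (M x z1) (M y z2) = M (M x y) (M z1 z2)"
proof -
  have z: "z1 \<in> S" "z2 \<in> S" using assms by (auto simp: central_def)
  have "M (M x z1) (M y z2) = M (M z1 x) (M y z2)" using com z assms by simp
  also have "\<dots> = M z1 (M x (M y z2))" using central_left[OF assms(1)] assms z cl by simp
  also have "M x (M y z2) = M (M x y) z2" using central_right[OF assms(2)] assms by simp
  also have "M (M x y) z2 = M z2 (M x y)" using com z assms cl by simp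
  also have "M z1 (M z2 (M x y)) = M (M z1 z2) (M x y)" using central_left[OF assms(1)] assms z cl by simp
  also have "\<dots> = M (M x y) (M z1 z2)" using com z assms cl by simp
  finally show ?thesis .
qed

end


definition good :: "'a set \<Rightarrow> ('a \<Rightarrow> 'a \<Rightarrow> 'a) \<Rightarrow> 'a \<Rightarrow> 'a set \<Rightarrow> bool" where
  "good Q m u N \<longleftrightarrow> N \<subseteq> Q \<and> u \<in> N \<and>
     (\<forall>x\<in>Q. \<forall>y\<in>Q. quot_mult m (lcoset m x N) (lcoset m y N) = lcoset m (m x y) N) \<and>
     (\<forall>x\<in>Q. \<forall>y\<in>Q. (lcoset m x N = lcoset m y N) = (\<exists>n\<in>N. y = m x n)) \<and>
     (\<forall>x\<in>Q. \<forall>y\<in>Q. \<forall>y'\<in>Q. lcoset m (m x y) N = lcoset m (m x y') N \<longrightarrow> lcoset m y N = lcoset m y' N)"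


lemma good_NQ: "good Q m u N \<Longrightarrow> N \<subseteq> Q" unfolding good_def by blast
lemma good_uN: "good Q m u N \<Longrightarrow> u \<in> N" unfolding good_def by blast
lemma good_hom: "good Q m u N \<Longrightarrow> x \<in> Q \<Longrightarrow> y \<in> Q \<Longrightarrow>
   quot_mult m (lcoset m x N) (lcoset m y N) = lcoset m (m x y) N" unfolding good_def by blast
lemma good_eq: "good Q m u N \<Longrightarrow> x \<in> Q \<Longrightarrow> y \<in> Q \<Longrightarrow>
   (lcoset m x N = lcoset m y N) = (\<exists>n\<in>N. y = m x n)" unfolding good_def by blast
lemma good_canc: "good Q m u N \<Longrightarrow> x \<in> Q \<Longrightarrow> y \<in> Q \<Longrightarrow> y' \<in> Q \<Longrightarrow>
   lcoset m (m x y) N = lcoset m (m x y') N \<Longrightarrow> lcoset m y N = lcoset m y' N" unfolding good_def by blast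
lemma goodI:
  assumes "N \<subseteq> Q" "u \<in> N"
    "\<And>x y. x \<in> Q \<Longrightarrow> y \<in> Q \<Longrightarrow> quot_mult m (lcoset m x N) (lcoset m y N) = lcoset m (m x y) N"
    "\<And>x y. x \<in> Q \<Longrightarrow> y \<in> Q \<Longrightarrow> (lcoset m x N = lcoset m y N) = (\<exists>n\<in>N. y = m x n)"
    "\<And>x y y'. x \<in> Q \<Longrightarrow> y \<in> Q \<Longrightarrow> y' \<in> Q \<Longrightarrow>
       lcoset m (m x y) N = lcoset m (m x y') N \<Longrightarrow> lcoset m y N = lcoset m y' N"
  shows "good Q m u N"
proof -
  have a: "\<forall>x\<in>Q. \<forall>y\<in>Q. quot_mult m (lcoset m x N) (lcoset m y N) = lcoset m (m x y) N"
    using assms(3) by blast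
  have b: "\<forall>x\<in>Q. \<forall>y\<in>Q. (lcoset m x N = lcoset m y N) = (\<exists>n\<in>N. y = m x n)"
    using assms(4) by blast
  have c: "\<forall>x\<in>Q. \<forall>y\<in>Q. \<forall>y'\<in>Q. lcoset m (m x y) N = lcoset m (m x y') N \<longrightarrow> lcoset m y N = lcoset m y' N"
    using assms(5) by blast
  show ?thesis unfolding good_def by (intro conjI; fact assms(1) assms(2) a b c)
qed

lemma coset_u:
  assumes "is_loop Q m u" "N \<subseteq> Q" shows "lcoset m u N = N"
proof -
  have "lcoset m u N = (\<lambda>n. n) ` N" unfolding lcoset_def
    by (rule image_cong[OF refl]) (use assms in \<open>auto simp: is_loop_def\<close>)
  thus ?thesis by simp
qed

lemma quot_cloop:
  assumes L: "is_loop Q m u" and C: "loop_commutative Q m" and G: "good Q m u N"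
  shows "cloop (quot_carrier Q m N) (quot_mult m) N"
proof -
  interpret Qc: cloop Q m u using L C by (simp add: cloop_def)
  define pi where "pi x = lcoset m x N" for x
  have NQ: "N \<subseteq> Q" and uN: "u \<in> N" using good_NQ[OF G] good_uN[OF G] by auto
  have hom: "quot_mult m (pi x) (pi y) = pi (m x y)" if "x \<in> Q" "y \<in> Q" for x y
    unfolding pi_def by (rule good_hom[OF G that])
  have G4: "pi y = pi y'" if "x \<in> Q" "y \<in> Q" "y' \<in> Q" "pi (m x y) = pi (m x y')" for x y y'
    using good_canc[OF G that(1-3)] that(4) by (simp add: pi_def)
  have car: "quot_carrier Q m N = pi ` Q" by (simp add: quot_carrier_def pi_def)
  have piu: "pi u = N" using coset_u[OF L NQ] by (simp add: pi_def)
  have Ncar: "N \<in> quot_carrier Q m N" using car piu Qc.e_in by auto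
  have clo: "\<forall>A\<in>quot_carrier Q m N. \<forall>B\<in>quot_carrier Q m N. quot_mult m A B \<in> quot_carrier Q m N"
    using hom Qc.cl car by auto
  have idl: "\<forall>A\<in>quot_carrier Q m N. quot_mult m N A = A \<and> quot_mult m A N = A"
    using hom piu car Qc.e_in Qc.lid Qc.rid by (metis imageE)
  have comq: "quot_mult m A B = quot_mult m B A" if "A \<in> quot_carrier Q m N" "B \<in> quot_carrier Q m N" for A B
    using that car hom Qc.com by (metis imageE)
  have lb: "bij_betw (\<lambda>B. quot_mult m A B) (quot_carrier Q m N) (quot_carrier Q m N)"
    if A: "A \<in> quot_carrier Q m N" for A
  proof -
    obtain x where x: "x \<in> Q" "A = pi x" using A car by auto
    have "inj_on (\<lambda>B. quot_mult m A B) (quot_carrier Q m N)"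
    proof (rule inj_onI)
      fix B B' assume "B \<in> quot_carrier Q m N" "B' \<in> quot_carrier Q m N" "quot_mult m A B = quot_mult m A B'"
      then obtain y y' where "y \<in> Q" "y' \<in> Q" "B = pi y" "B' = pi y'" "pi (m x y) = pi (m x y')"
        using car x hom by auto
      thus "B = B'" using G4 x by blast
    qed
    moreover have "(\<lambda>B. quot_mult m A B) ` quot_carrier Q m N = quot_carrier Q m N"
    proof
      show "(\<lambda>B. quot_mult m A B) ` quot_carrier Q m N \<subseteq> quot_carrier Q m N" using clo A by auto
      show "quot_carrier Q m N \<subseteq> (\<lambda>B. quot_mult m A B) ` quot_carrier Q m N"
      proof
        fix C assume "C \<in> quot_carrier Q m N"
        then obtain c where c: "c \<in> Q" "C = pi c" using car by auto
        obtain t where t: "t \<in> Q" "m x t = c" using Qc.ldiv x c by blast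
        have "C = quot_mult m A (pi t)" using hom x t c by simp
        thus "C \<in> (\<lambda>B. quot_mult m A B) ` quot_carrier Q m N" using t car by auto
      qed
    qed
    ultimately show ?thesis by (simp add: bij_betw_def)
  qed
  have rb: "bij_betw (\<lambda>B. quot_mult m B A) (quot_carrier Q m N) (quot_carrier Q m N)"
    if A: "A \<in> quot_carrier Q m N" for A
  proof -
    have "bij_betw (\<lambda>B. quot_mult m B A) (quot_carrier Q m N) (quot_carrier Q m N)
       \<longleftrightarrow> bij_betw (\<lambda>B. quot_mult m A B) (quot_carrier Q m N) (quot_carrier Q m N)"
      by (rule bij_betw_cong) (rule comq[OF _ A])
    thus ?thesis using lb[OF A] by simp
  qed
  have il: "is_loop (quot_carrier Q m N) (quot_mult m) N"
    unfolding is_loop_def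
    apply (intro conjI ballI)
    using Ncar clo idl lb rb by simp_all
  have lc: "loop_commutative (quot_carrier Q m N) (quot_mult m)"
    unfolding loop_commutative_def using comq by simp
  show ?thesis unfolding cloop_def using il lc by (rule conjI)
qed

lemma assoc_char:
  assumes L: "is_loop Q m u" and C: "loop_commutative Q m" and abc: "a \<in> Q" "b \<in> Q" "c \<in> Q"
  shows "associator Q m a b c \<in> Q \<and> m (m a b) c = m (m a (m b c)) (associator Q m a b c)"
proof -
  interpret Qc: cloop Q m u using L C by (simp add: cloop_def)
  have ex: "\<exists>!z. z \<in> Q \<and> m (m a b) c = m (m a (m b c)) z"
  proof -
    obtain t where "t \<in> Q" "m (m a (m b c)) t = m (m a b) c" using Qc.ldiv Qc.cl abc by metis
    moreover have "z = t" if "z \<in> Q" "m (m a b) c = m (m a (m b c)) z" "t \<in> Q" "m (m a (m b c)) t = m (m a b) c" for z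
      using Qc.linj[of "m a (m b c)" z t] that Qc.cl abc by simp
    ultimately show ?thesis by metis
  qed
  show ?thesis unfolding associator_def using theI'[OF ex] by blast
qed

lemma assoc_in_N:
  assumes L: "is_loop Q m u" and C: "loop_commutative Q m" and G: "good Q m u N"
    and pqr: "p \<in> Q" "q \<in> Q" "r \<in> Q"
    and eq: "lcoset m (m (m p q) r) N = lcoset m (m p (m q r)) N"
  shows "associator Q m p q r \<in> N"
proof -
  interpret Qc: cloop Q m u using L C by (simp add: cloop_def)
  have NQ: "N \<subseteq> Q" using good_NQ[OF G] .
  obtain n where n: "n \<in> N" "m (m p q) r = m (m p (m q r)) n"
    using good_eq[OF G Qc.cl[OF pqr(1) Qc.cl[OF pqr(2,3)]] Qc.cl[OF Qc.cl[OF pqr(1,2)] pqr(3)]] eq[symmetric] by blast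
  have "m (m p q) r = m (m p (m q r)) (associator Q m p q r)" "associator Q m p q r \<in> Q"
    using assoc_char[OF L C pqr] by auto
  hence "associator Q m p q r = n" using n Qc.linj[of "m p (m q r)"] Qc.cl pqr NQ by auto
  thus ?thesis using n by simp
qed

lemma central_assocs:
  assumes L: "is_loop Q m u" and C: "loop_commutative Q m" and G: "good Q m u N"
    and x: "x \<in> Q" and xc: "lcoset m x N \<in> loop_center (quot_carrier Q m N) (quot_mult m) N"
    and b: "b \<in> Q" and c: "c \<in> Q"
  shows "associator Q m x b c \<in> N \<and> associator Q m b x c \<in> N \<and> associator Q m b c x \<in> N"
proof -
  interpret Qc: cloop Q m u using L C by (simp add: cloop_def)
  interpret P: cloop "quot_carrier Q m N" "quot_mult m" N using quot_cloop[OF L C G] .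
  define pi where "pi x = lcoset m x N" for x
  have hom: "pi (m x y) = quot_mult m (pi x) (pi y)" if "x \<in> Q" "y \<in> Q" for x y
    unfolding pi_def by (rule good_hom[OF G that, symmetric])
  have inc: "pi y \<in> quot_carrier Q m N" if "y \<in> Q" for y using that by (simp add: quot_carrier_def pi_def)
  have cen: "P.central (pi x)" using P.center_central xc by (simp add: pi_def)
  have 1: "pi (m (m x b) c) = pi (m x (m b c))"
    using hom x b c Qc.cl P.central_left[OF cen inc[OF b] inc[OF c]] by simp
  have 2: "pi (m (m b x) c) = pi (m b (m x c))"
    using hom x b c Qc.cl P.central_mid[OF cen inc[OF b] inc[OF c]] by simp
  have 3: "pi (m (m b c) x) = pi (m b (m c x))"
    using hom x b c Qc.cl P.central_right[OF cen inc[OF b] inc[OF c]] by simp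
  show ?thesis using assoc_in_N[OF L C G] 1 2 3 x b c unfolding pi_def by blast
qed


lemma good_step:
  assumes L: "is_loop Q m u" and C: "loop_commutative Q m" and G: "good Q m u N"
  shows "good Q m u {x \<in> Q. lcoset m x N \<in> loop_center (quot_carrier Q m N) (quot_mult m) N}"
proof -
  interpret Qc: cloop Q m u using L C by (simp add: cloop_def)
  interpret P: cloop "quot_carrier Q m N" "quot_mult m" N using quot_cloop[OF L C G] .
  define Z where "Z = {x \<in> Q. lcoset m x N \<in> loop_center (quot_carrier Q m N) (quot_mult m) N}"
  define pi where "pi x = lcoset m x N" for x
  have NQ: "N \<subseteq> Q" using good_NQ[OF G] .
  have hom: "pi (m x y) = quot_mult m (pi x) (pi y)" if "x \<in> Q" "y \<in> Q" for x y
    unfolding pi_def by (rule good_hom[OF G that, symmetric])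
  have inc: "pi y \<in> quot_carrier Q m N" if "y \<in> Q" for y using that by (simp add: quot_carrier_def pi_def)
  have Zi: "x \<in> Z \<longleftrightarrow> x \<in> Q \<and> P.central (pi x)" for x
    using P.center_iff by (auto simp: Z_def pi_def)
  have ZQ: "Z \<subseteq> Q" using Zi by auto
  have piu: "pi u = N" using coset_u[OF L NQ] by (simp add: pi_def)
  have uZ: "u \<in> Z" using Zi piu P.central_e Qc.e_in by simp
  have canc: "pi s = pi t" if "x \<in> Q" "s \<in> Q" "t \<in> Q" "quot_mult m (pi x) (pi s) = quot_mult m (pi x) (pi t)" for x s t
    by (rule P.linj[OF inc[OF that(1)] inc[OF that(2)] inc[OF that(3)] that(4)])
  have ZiQ: "z \<in> Q" if "z \<in> Z" for z using that Zi by simp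
  have Zic: "P.central (pi z)" if "z \<in> Z" for z using that Zi by simp
  have Zin: "z \<in> Z" if "z \<in> Q" "P.central (pi z)" for z using that Zi by simp
  have lcI: "m x z \<in> lcoset m x Z" if "z \<in> Z" for x z using that by (simp add: lcoset_def)
  have lcE: "\<exists>z\<in>Z. v = m x z" if "v \<in> lcoset m x Z" for v x using that by (auto simp: lcoset_def)
  have eqI: "lcoset m (m x z) Z = lcoset m x Z" if x: "x \<in> Q" and z: "z \<in> Z" for x z
  proof
    have zQ: "z \<in> Q" and cz: "P.central (pi z)" using ZiQ[OF z] Zic[OF z] .
    have xz: "m x z \<in> Q" using Qc.cl[OF x zQ] .
    show "lcoset m (m x z) Z \<subseteq> lcoset m x Z"
    proof
      fix v assume "v \<in> lcoset m (m x z) Z"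
      then obtain w where w: "w \<in> Z" "v = m (m x z) w" using lcE by blast
      have wQ: "w \<in> Q" and cw: "P.central (pi w)" using ZiQ[OF w(1)] Zic[OF w(1)] .
      obtain t where t: "t \<in> Q" "m x t = m (m x z) w" using Qc.ldiv[OF x Qc.cl[OF xz wQ]] by blast
      have "quot_mult m (pi x) (pi t) = pi (m x t)" using hom[OF x t(1)] by simp
      also have "\<dots> = pi (m (m x z) w)" using t(2) by simp
      also have "\<dots> = quot_mult m (quot_mult m (pi x) (pi z)) (pi w)"
        using hom[OF xz wQ] hom[OF x zQ] by simp
      also have "\<dots> = quot_mult m (pi x) (quot_mult m (pi z) (pi w))"
        by (rule P.central_mid[OF cz inc[OF x] inc[OF wQ]])
      also have "\<dots> = quot_mult m (pi x) (pi (m z w))" using hom[OF zQ wQ] by simp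
      finally have "pi t = pi (m z w)" by (rule canc[OF x t(1) Qc.cl[OF zQ wQ]])
      hence "P.central (pi t)" using P.central_mult[OF cz cw] hom[OF zQ wQ] by simp
      hence "t \<in> Z" by (rule Zin[OF t(1)])
      hence "m x t \<in> lcoset m x Z" by (rule lcI)
      thus "v \<in> lcoset m x Z" using t(2) w(2) by simp
    qed
    show "lcoset m x Z \<subseteq> lcoset m (m x z) Z"
    proof
      fix v assume "v \<in> lcoset m x Z"
      then obtain w where w: "w \<in> Z" "v = m x w" using lcE by blast
      have wQ: "w \<in> Q" and cw: "P.central (pi w)" using ZiQ[OF w(1)] Zic[OF w(1)] .
      obtain t where t: "t \<in> Q" "m (m x z) t = m x w" using Qc.ldiv[OF xz Qc.cl[OF x wQ]] by blast
      obtain Z' where Z': "P.central Z'" "quot_mult m (pi z) Z' = N" using P.central_inv[OF cz] by blast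
      have Z'c: "Z' \<in> quot_carrier Q m N" using Z'(1) by (simp add: P.central_def)
      have cW: "P.central (quot_mult m Z' (pi w))" by (rule P.central_mult[OF Z'(1) cw])
      have Z'W: "quot_mult m Z' (pi w) \<in> quot_carrier Q m N" by (rule P.cl[OF Z'c inc[OF wQ]])
      have "quot_mult m (pi (m x z)) (quot_mult m Z' (pi w))
           = quot_mult m (quot_mult m (pi x) (pi z)) (quot_mult m Z' (pi w))"
        using hom[OF x zQ] by simp
      also have "\<dots> = quot_mult m (pi x) (quot_mult m (pi z) (quot_mult m Z' (pi w)))"
        by (rule P.central_mid[OF cz inc[OF x] Z'W])
      also have "quot_mult m (pi z) (quot_mult m Z' (pi w)) = quot_mult m (quot_mult m (pi z) Z') (pi w)"
        by (rule P.central_left[OF cz Z'c inc[OF wQ], symmetric])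
      also have "\<dots> = pi w" using Z'(2) P.lid[OF inc[OF wQ]] by simp
      also have "quot_mult m (pi x) (pi w) = pi (m x w)" using hom[OF x wQ] by simp
      also have "\<dots> = pi (m (m x z) t)" using t(2) by simp
      also have "\<dots> = quot_mult m (pi (m x z)) (pi t)" by (rule hom[OF xz t(1)])
      finally have "quot_mult m (pi (m x z)) (quot_mult m Z' (pi w)) = quot_mult m (pi (m x z)) (pi t)" .
      hence "quot_mult m Z' (pi w) = pi t"
        by (rule P.linj[OF inc[OF xz] Z'W inc[OF t(1)]])
      hence "P.central (pi t)" using cW by simp
      hence "t \<in> Z" by (rule Zin[OF t(1)])
      hence "m (m x z) t \<in> lcoset m (m x z) Z" by (rule lcI)
      thus "v \<in> lcoset m (m x z) Z" using t(2) w(2) by simp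
    qed
  qed
  have yy: "y \<in> lcoset m y Z" if "y \<in> Q" for y
  proof -
    have "m y u \<in> lcoset m y Z" by (rule lcI[OF uZ])
    thus ?thesis using Qc.rid[OF that] by simp
  qed
  have G3: "(lcoset m x Z = lcoset m y Z) = (\<exists>z\<in>Z. y = m x z)" if x: "x \<in> Q" and y: "y \<in> Q" for x y
  proof
    assume "lcoset m x Z = lcoset m y Z"
    hence "y \<in> lcoset m x Z" using yy[OF y] by simp
    thus "\<exists>z\<in>Z. y = m x z" by (rule lcE)
  next
    assume "\<exists>z\<in>Z. y = m x z"
    then obtain z where "z \<in> Z" "y = m x z" by blast
    thus "lcoset m x Z = lcoset m y Z" using eqI[OF x] by simp
  qed
  have G2: "quot_mult m (lcoset m x Z) (lcoset m y Z) = lcoset m (m x y) Z" if x: "x \<in> Q" and y: "y \<in> Q" for x y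
  proof
    have xy: "m x y \<in> Q" by (rule Qc.cl[OF x y])
    show "quot_mult m (lcoset m x Z) (lcoset m y Z) \<subseteq> lcoset m (m x y) Z"
    proof
      fix v assume "v \<in> quot_mult m (lcoset m x Z) (lcoset m y Z)"
      then obtain p q where pq: "p \<in> lcoset m x Z" "q \<in> lcoset m y Z" "v = m p q"
        by (auto simp: quot_mult_def)
      obtain z1 where z1: "z1 \<in> Z" "p = m x z1" using lcE[OF pq(1)] by blast
      obtain z2 where z2: "z2 \<in> Z" "q = m y z2" using lcE[OF pq(2)] by blast
      have zQ: "z1 \<in> Q" "z2 \<in> Q" using ZiQ z1 z2 by auto
      have cz: "P.central (pi z1)" "P.central (pi z2)" using Zic z1 z2 by auto
      have pQ: "p \<in> Q" "q \<in> Q" using Qc.cl x y zQ z1 z2 by auto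
      obtain t where t: "t \<in> Q" "m (m x y) t = v" using Qc.ldiv[OF xy Qc.cl[OF pQ]] pq(3) by blast
      have "quot_mult m (pi (m x y)) (pi t) = pi v" using hom[OF xy t(1)] t(2) by simp
      also have "\<dots> = quot_mult m (pi p) (pi q)" using hom[OF pQ] pq(3) by simp
      also have "\<dots> = quot_mult m (quot_mult m (pi x) (pi z1)) (quot_mult m (pi y) (pi z2))"
        using hom[OF x zQ(1)] hom[OF y zQ(2)] z1(2) z2(2) by simp
      also have "\<dots> = quot_mult m (quot_mult m (pi x) (pi y)) (quot_mult m (pi z1) (pi z2))"
        by (rule P.central_prod[OF cz inc[OF x] inc[OF y]])
      also have "\<dots> = quot_mult m (pi (m x y)) (pi (m z1 z2))"
        using hom[OF x y] hom[OF zQ] by simp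
      finally have "pi t = pi (m z1 z2)" by (rule canc[OF xy t(1) Qc.cl[OF zQ]])
      hence "P.central (pi t)" using P.central_mult[OF cz] hom[OF zQ] by simp
      hence "t \<in> Z" by (rule Zin[OF t(1)])
      hence "m (m x y) t \<in> lcoset m (m x y) Z" by (rule lcI)
      thus "v \<in> lcoset m (m x y) Z" using t(2) by simp
    qed
    show "lcoset m (m x y) Z \<subseteq> quot_mult m (lcoset m x Z) (lcoset m y Z)"
    proof
      fix v assume "v \<in> lcoset m (m x y) Z"
      then obtain w where w: "w \<in> Z" "v = m (m x y) w" using lcE by blast
      have wQ: "w \<in> Q" and cw: "P.central (pi w)" using ZiQ[OF w(1)] Zic[OF w(1)] .
      have vQ: "v \<in> Q" using w(2) Qc.cl[OF xy wQ] by simp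
      obtain q where q: "q \<in> Q" "m x q = v" using Qc.ldiv[OF x vQ] by blast
      obtain t where t: "t \<in> Q" "m y t = q" using Qc.ldiv[OF y q(1)] by blast
      have "quot_mult m (pi x) (quot_mult m (pi y) (pi t)) = quot_mult m (pi x) (pi q)"
        using hom[OF y t(1)] t(2) by simp
      also have "\<dots> = pi v" using hom[OF x q(1)] q(2) by simp
      also have "\<dots> = quot_mult m (quot_mult m (pi x) (pi y)) (pi w)"
        using w(2) hom[OF xy wQ] hom[OF x y] by simp
      also have "\<dots> = quot_mult m (pi x) (quot_mult m (pi y) (pi w))"
        by (rule P.central_right[OF cw inc[OF x] inc[OF y]])
      finally have "quot_mult m (pi x) (quot_mult m (pi y) (pi t)) = quot_mult m (pi x) (quot_mult m (pi y) (pi w))" .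
      hence "quot_mult m (pi y) (pi t) = quot_mult m (pi y) (pi w)"
        by (rule P.linj[OF inc[OF x] P.cl[OF inc[OF y] inc[OF t(1)]] P.cl[OF inc[OF y] inc[OF wQ]]])
      hence "pi t = pi w" by (rule canc[OF y t(1) wQ])
      hence "t \<in> Z" using Zin[OF t(1)] cw by simp
      hence 2: "q \<in> lcoset m y Z" using lcI[of t y] t(2) by simp
      have 1: "x \<in> lcoset m x Z" by (rule yy[OF x])
      show "v \<in> quot_mult m (lcoset m x Z) (lcoset m y Z)"
        using 1 2 q(2) unfolding quot_mult_def by blast
    qed
  qed
  have G4: "lcoset m y Z = lcoset m y' Z"
    if x: "x \<in> Q" and y: "y \<in> Q" and y': "y' \<in> Q" and eq: "lcoset m (m x y) Z = lcoset m (m x y') Z" for x y y'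
  proof -
    have xy: "m x y \<in> Q" "m x y' \<in> Q" using Qc.cl x y y' by auto
    have "\<exists>z\<in>Z. m x y' = m (m x y) z" using G3[OF xy] eq by simp
    then obtain z where z: "z \<in> Z" "m x y' = m (m x y) z" by blast
    have zQ: "z \<in> Q" and cz: "P.central (pi z)" using ZiQ[OF z(1)] Zic[OF z(1)] .
    obtain t where t: "t \<in> Q" "m y t = y'" using Qc.ldiv[OF y y'] by blast
    have "quot_mult m (pi x) (pi y') = pi (m x y')" using hom[OF x y'] by simp
    also have "\<dots> = pi (m (m x y) z)" using z(2) by simp
    also have "\<dots> = quot_mult m (quot_mult m (pi x) (pi y)) (pi z)" using hom[OF xy(1) zQ] hom[OF x y] by simp
    also have "\<dots> = quot_mult m (pi x) (quot_mult m (pi y) (pi z))"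
      by (rule P.central_right[OF cz inc[OF x] inc[OF y]])
    also have "\<dots> = quot_mult m (pi x) (pi (m y z))" using hom[OF y zQ] by simp
    finally have "pi y' = pi (m y z)" by (rule canc[OF x y' Qc.cl[OF y zQ]])
    hence "quot_mult m (pi y) (pi t) = quot_mult m (pi y) (pi z)" using hom[OF y t(1)] hom[OF y zQ] t(2) by simp
    hence "pi t = pi z" by (rule canc[OF y t(1) zQ])
    hence "t \<in> Z" using Zin[OF t(1)] cz by simp
    hence "lcoset m (m y t) Z = lcoset m y Z" by (rule eqI[OF y])
    thus ?thesis using t(2) by simp
  qed
  show ?thesis unfolding Z_def[symmetric] by (rule goodI[OF ZQ uZ G2 G3 G4])
qed

lemma good_upper:
  assumes L: "is_loop Q m u" and C: "loop_commutative Q m"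
  shows "good Q m u (upper_center Q m u i)"
proof (induction i)
  case 0
  interpret Qc: cloop Q m u using L C by (simp add: cloop_def)
  have lc: "lcoset m x {u} = {x}" if "x \<in> Q" for x using that Qc.rid by (simp add: lcoset_def)
  have "good Q m u {u}"
  proof (rule goodI)
    show "{u} \<subseteq> Q" using Qc.e_in by simp
    show "u \<in> {u}" by simp
    fix x y assume xy: "x \<in> Q" "y \<in> Q"
    show "quot_mult m (lcoset m x {u}) (lcoset m y {u}) = lcoset m (m x y) {u}"
      unfolding lc[OF xy(1)] lc[OF xy(2)] lc[OF Qc.cl[OF xy]] by (simp add: quot_mult_def)
    show "(lcoset m x {u} = lcoset m y {u}) = (\<exists>n\<in>{u}. y = m x n)"
      unfolding lc[OF xy(1)] lc[OF xy(2)] using Qc.rid[OF xy(1)] by auto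
  next
    fix x y y' assume xy: "x \<in> Q" "y \<in> Q" "y' \<in> Q" "lcoset m (m x y) {u} = lcoset m (m x y') {u}"
    hence "m x y = m x y'" using lc Qc.cl by simp
    hence "y = y'" using Qc.linj xy by blast
    thus "lcoset m y {u} = lcoset m y' {u}" by simp
  qed
  thus ?case by simp
next
  case (Suc i)
  show ?case using good_step[OF L C Suc] by (simp add: Let_def)
qed


theorem lemma2p5:
  fixes Q :: "'a set" and m :: "'a \<Rightarrow> 'a \<Rightarrow> 'a" and u :: 'a
  assumes "is_loop Q m u"
    and "loop_commutative Q m"
    and "loop_automorphic Q m u"
    and "nilpotency_class Q m u 3"
  shows "\<forall>a\<in>Q. \<forall>b\<in>Q. \<forall>c\<in>Q. \<forall>d\<in>Q. \<forall>e\<in>Q.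
           loop_inverse Q m u (associator Q m (associator Q m a b c) d e)
             = associator Q m e d (associator Q m a b c)
         \<and> associator Q m a (associator Q m b c d) e
             = m (associator Q m a e (associator Q m b c d))
                 (associator Q m (associator Q m b c d) a e)"
proof -
  note L = assms(1) and C = assms(2)
  interpret Qc: cloop Q m u using L C by (simp add: cloop_def)
  let ?Z = "upper_center Q m u"
  have Z3: "?Z 3 = Q" using assms(4) by (simp add: nilpotency_class_def)
  have Zs: "?Z (Suc i) = {x \<in> Q. lcoset m x (?Z i) \<in> loop_center (quot_carrier Q m (?Z i)) (quot_mult m) (?Z i)}" for i
    by (simp add: Let_def)
  have ZQ: "?Z i \<subseteq> Q" for i using good_NQ[OF good_upper[OF L C]] .
  have A: "associator Q m a b c \<in> Q" if "a \<in> Q" "b \<in> Q" "c \<in> Q" for a b c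
    using assoc_char[OF L C that] by simp
  have f1: "associator Q m a b c \<in> ?Z 2" if "a \<in> Q" "b \<in> Q" "c \<in> Q" for a b c
  proof -
    have "a \<in> ?Z (Suc 2)" using Z3 that by (simp add: numeral_3_eq_3)
    hence "lcoset m a (?Z 2) \<in> loop_center (quot_carrier Q m (?Z 2)) (quot_mult m) (?Z 2)"
      using Zs[of 2] by blast
    thus ?thesis using central_assocs[OF L C good_upper[OF L C] that(1) _ that(2,3)] by blast
  qed
  have f2: "associator Q m z b c \<in> ?Z 1 \<and> associator Q m b z c \<in> ?Z 1 \<and> associator Q m b c z \<in> ?Z 1"
    if "z \<in> ?Z 2" "b \<in> Q" "c \<in> Q" for z b c
  proof -
    have "z \<in> ?Z (Suc 1)" using that by (simp add: numeral_2_eq_2)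
    hence "z \<in> Q" "lcoset m z (?Z 1) \<in> loop_center (quot_carrier Q m (?Z 1)) (quot_mult m) (?Z 1)"
      using Zs[of 1] by blast+
    thus ?thesis using central_assocs[OF L C good_upper[OF L C] _ _ that(2,3)] by blast
  qed
  have f3: "Qc.central w" if "w \<in> ?Z 1" for w
  proof -
    have "w \<in> ?Z (Suc 0)" using that by simp
    hence w: "w \<in> Q" "lcoset m w (?Z 0) \<in> loop_center (quot_carrier Q m (?Z 0)) (quot_mult m) (?Z 0)"
      using Zs[of 0] by blast+
    have "m (m w a) b = m w (m a b)" if "a \<in> Q" "b \<in> Q" for a b
    proof -
      have "associator Q m w a b \<in> {u}"
        using central_assocs[OF L C good_upper[OF L C] w that] by simp
      thus ?thesis using assoc_char[OF L C w(1) that] Qc.rid Qc.cl w that by simp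
    qed
    thus ?thesis using w by (simp add: Qc.central_def)
  qed
  show ?thesis
  proof (intro ballI conjI)
    fix a b c d e assume ab: "a \<in> Q" "b \<in> Q" "c \<in> Q" "d \<in> Q" "e \<in> Q"
    define z where "z = associator Q m a b c"
    have zQ: "z \<in> Q" using A ab by (simp add: z_def)
    have z2: "z \<in> ?Z 2" using f1 ab by (simp add: z_def)
    define p where "p = associator Q m z d e"
    define q where "q = associator Q m e d z"
    have pc: "Qc.central p" unfolding p_def by (rule f3) (use f2[OF z2 ab(4,5)] in blast)
    have qc: "Qc.central q" unfolding q_def by (rule f3) (use f2[OF z2 ab(5,4)] in blast)
    have pQ: "p \<in> Q" and qQ: "q \<in> Q" using pc qc by (auto simp: Qc.central_def)
    have e1: "m (m z d) e = m (m z (m d e)) p" using assoc_char[OF L C zQ ab(4,5)] by (simp add: p_def)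
    have e2: "m (m e d) z = m (m e (m d z)) q" using assoc_char[OF L C ab(5,4) zQ] by (simp add: q_def)
    define X where "X = m (m z d) e"
    define Y where "Y = m z (m d e)"
    have XQ: "X \<in> Q" and YQ: "Y \<in> Q" using Qc.cl zQ ab by (auto simp: X_def Y_def)
    have "m (m e d) z = Y" using Qc.com Qc.cl zQ ab by (simp add: Y_def)
    moreover have "m e (m d z) = X" using Qc.com Qc.cl zQ ab by (simp add: X_def)
    ultimately have YX: "Y = m X q" using e2 by simp
    have XY: "X = m Y p" using e1 by (simp add: X_def Y_def)
    have "m X u = m X (m q p)" using XY YX Qc.central_mid[OF qc XQ pQ] Qc.rid XQ by simp
    hence qp: "m q p = u" using Qc.linj[OF XQ Qc.e_in Qc.cl[OF qQ pQ]] by simp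
    hence pq: "m p q = u" using Qc.com pQ qQ by simp
    have "loop_inverse Q m u p = q" unfolding loop_inverse_def
    proof (rule the_equality)
      show "q \<in> Q \<and> m p q = u \<and> m q p = u" using qQ pq qp by simp
      fix w assume "w \<in> Q \<and> m p w = u \<and> m w p = u"
      thus "w = q" using Qc.linj[OF pQ _ qQ] pq by auto
    qed
    thus "loop_inverse Q m u (associator Q m (associator Q m a b c) d e)
             = associator Q m e d (associator Q m a b c)"
      by (simp add: p_def q_def z_def)
  next
    fix a b c d e assume ab: "a \<in> Q" "b \<in> Q" "c \<in> Q" "d \<in> Q" "e \<in> Q"
    define z where "z = associator Q m b c d"
    have zQ: "z \<in> Q" using A ab by (simp add: z_def)
    have z2: "z \<in> ?Z 2" using f1 ab by (simp add: z_def)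
    define r1 where "r1 = associator Q m a z e"
    define r2 where "r2 = associator Q m a e z"
    define r3 where "r3 = associator Q m z a e"
    have c1: "Qc.central r1" unfolding r1_def by (rule f3) (use f2[OF z2 ab(1,5)] in blast)
    have c2: "Qc.central r2" unfolding r2_def by (rule f3) (use f2[OF z2 ab(1,5)] in blast)
    have c3: "Qc.central r3" unfolding r3_def by (rule f3) (use f2[OF z2 ab(1,5)] in blast)
    have rQ: "r1 \<in> Q" "r2 \<in> Q" "r3 \<in> Q" using c1 c2 c3 by (auto simp: Qc.central_def)
    have e1: "m (m a z) e = m (m a (m z e)) r1" using assoc_char[OF L C ab(1) zQ ab(5)] by (simp add: r1_def)
    have e2: "m (m a e) z = m (m a (m e z)) r2" using assoc_char[OF L C ab(1,5) zQ] by (simp add: r2_def)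
    have e3: "m (m z a) e = m (m z (m a e)) r3" using assoc_char[OF L C zQ ab(1,5)] by (simp add: r3_def)
    define W where "W = m a (m e z)"
    have WQ: "W \<in> Q" using Qc.cl zQ ab by (simp add: W_def)
    have "m (m a z) e = m (m z (m a e)) r3" using e3 Qc.com zQ ab by simp
    also have "m z (m a e) = m (m a e) z" using Qc.com Qc.cl zQ ab by simp
    also have "\<dots> = m W r2" using e2 by (simp add: W_def)
    also have "m (m W r2) r3 = m W (m r2 r3)" using Qc.central_mid[OF c2 WQ rQ(3)] .
    finally have "m W r1 = m W (m r2 r3)" using e1 Qc.com zQ ab by (simp add: W_def)
    hence "r1 = m r2 r3" using Qc.linj[OF WQ rQ(1) Qc.cl[OF rQ(2,3)]] by simp
    thus "associator Q m a (associator Q m b c d) e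
             = m (associator Q m a e (associator Q m b c d))
                 (associator Q m (associator Q m b c d) a e)"
      by (simp add: r1_def r2_def r3_def z_def)
  qed
qed

end
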